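(* Let $1\le k<n$. The map $f_k(S)=(\lambda^{(1)}_i+\lambda^{(2)}_i)_{1\le i\le k}$ restricts to an injection $\Theta(k,2n+1)\to P(n-k,n)$.
   Context: Root system $B_n$: positive roots $e_a\pm e_b$ ($a<b$), $e_a$; simple roots $e_i-e_{i+1}$ ($i<n$), $e_n$; order $\alpha\le\beta$ iff $\beta-\alpha$ is a nonnegative integer combination of simple roots. Base region: roots $e_a\pm e_b$ ($a\le k<b$) and $e_a$ ($a\le k$), with $i$-th row ($1\le i\le k$) consisting of $e_{k+1-i}\pm e_b$ ($b>k$) and $e_{k+1-i}$. Top region: roots $e_a+e_b$ with $a<b\le k$. For $S$ a set of roots, $\lambda^{(1)}_i$ is the number of roots of $S$ in the $i$-th base row and $\lambda^{(2)}_i$ the number of roots of $S$ of the form $e_a+e_{k+1-i}$, $a<k+1-i$. $S$ (contained in the union of the two regions) is a $W^{OG(k,2n+1)}$-diagram if it meets each region in a lower order ideal of that region and, for each top-region root $e_a+e_b$, $e_a+e_b\in S$ whenever $S$ contains more than $2n+1-2k$ roots of the base rows indexed by $a$ and $b$ (rows $k+1-a$ and $k+1-b$) combined, and $e_a+e_b\notin S$ whenever it contains fewer than $2n+1-2k$ of them. $\Theta(k,2n+1)$ is the set of such diagrams. $P(n-k,n)$ is the set of partitions $\gamma=(\gamma_1\ge\dots\ge\gamma_k\ge0)$ with $\gamma_1\le 2n-k$ and $\gamma_i>\gamma_{i+1}$ whenever $\gamma_i>n-k$. *)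

theory Defs
  imports Main "HOL-Library.Function_Algebras"
begin

type_synonym vec = "nat \<Rightarrow> int"

text \<open>Standard basis vector e_a of Z^n (coordinates indexed by 1..n).\<close>
definition ev :: "nat \<Rightarrow> vec" where
  "ev a = (\<lambda>j. if j = a then 1 else 0)"

definition pos_roots :: "nat \<Rightarrow> vec set" where
  "pos_roots n =
     {ev a - ev b | a b. 1 \<le> a \<and> a < b \<and> b \<le> n}
   \<union> {ev a + ev b | a b. 1 \<le> a \<and> a < b \<and> b \<le> n}
   \<union> {ev a | a. 1 \<le> a \<and> a \<le> n}"

definition root_le :: "nat \<Rightarrow> vec \<Rightarrow> vec \<Rightarrow> bool" where
  "root_le n \<alpha> \<beta> \<longleftrightarrow>
     (\<exists>c :: nat \<Rightarrow> nat. \<beta> - \<alpha> =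
        (\<Sum>i\<in>{1..<n}. of_nat (c i) * (ev i - ev (Suc i))) + of_nat (c n) * ev n)"

definition base_row :: "nat \<Rightarrow> nat \<Rightarrow> nat \<Rightarrow> vec set" where
  "base_row k n i =
     {ev (k + 1 - i) - ev b | b. k < b \<and> b \<le> n}
   \<union> {ev (k + 1 - i) + ev b | b. k < b \<and> b \<le> n}
   \<union> {ev (k + 1 - i)}"

definition base_region :: "nat \<Rightarrow> nat \<Rightarrow> vec set" where
  "base_region k n = (\<Union>i\<in>{1..k}. base_row k n i)"

definition top_region :: "nat \<Rightarrow> vec set" where
  "top_region k = {ev a + ev b | a b. 1 \<le> a \<and> a < b \<and> b \<le> k}"

definition lower_ideal_in :: "nat \<Rightarrow> vec set \<Rightarrow> vec set \<Rightarrow> bool" where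
  "lower_ideal_in n R I \<longleftrightarrow> I \<subseteq> R \<and>
     (\<forall>x\<in>I. \<forall>y\<in>R. root_le n y x \<longrightarrow> y \<in> I)"

definition lambda1 :: "nat \<Rightarrow> nat \<Rightarrow> vec set \<Rightarrow> nat \<Rightarrow> nat" where
  "lambda1 k n S i = card (S \<inter> base_row k n i)"

definition lambda2 :: "nat \<Rightarrow> vec set \<Rightarrow> nat \<Rightarrow> nat" where
  "lambda2 k S i = card {ev a + ev (k + 1 - i) | a. 1 \<le> a \<and> a < k + 1 - i \<and>
                                                 ev a + ev (k + 1 - i) \<in> S}"

definition is_OG_diagram :: "nat \<Rightarrow> nat \<Rightarrow> vec set \<Rightarrow> bool" where
  "is_OG_diagram k n S \<longleftrightarrow>
     S \<subseteq> base_region k n \<union> top_region k \<and>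
     lower_ideal_in n (base_region k n) (S \<inter> base_region k n) \<and>
     lower_ideal_in n (top_region k) (S \<inter> top_region k) \<and>
     (\<forall>a b. 1 \<le> a \<and> a < b \<and> b \<le> k \<longrightarrow>
        (let m = card (S \<inter> (base_row k n (k + 1 - a) \<union> base_row k n (k + 1 - b))) in
          (m > 2 * n + 1 - 2 * k \<longrightarrow> ev a + ev b \<in> S) \<and>
          (m < 2 * n + 1 - 2 * k \<longrightarrow> ev a + ev b \<notin> S)))"

text \<open>Theta(k, 2n+1).\<close>
definition Theta :: "nat \<Rightarrow> nat \<Rightarrow> vec set set" where
  "Theta k n = {S. is_OG_diagram k n S}"

text \<open>P(n-k, n): partitions with k parts, encoded as gamma : nat => nat with gamma i the
  i-th part for 1 <= i <= k and gamma i = 0 otherwise.\<close>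
definition P_part :: "nat \<Rightarrow> nat \<Rightarrow> (nat \<Rightarrow> nat) set" where
  "P_part k n = {\<gamma>. (\<forall>i. i \<notin> {1..k} \<longrightarrow> \<gamma> i = 0) \<and>
      (\<forall>i\<in>{1..<k}. \<gamma> (Suc i) \<le> \<gamma> i) \<and>
      \<gamma> 1 \<le> 2 * n - k \<and>
      (\<forall>i\<in>{1..<k}. \<gamma> i > n - k \<longrightarrow> \<gamma> i > \<gamma> (Suc i))}"

definition f_map :: "nat \<Rightarrow> nat \<Rightarrow> vec set \<Rightarrow> (nat \<Rightarrow> nat)" where
  "f_map k n S = (\<lambda>i. if i \<in> {1..k} then lambda1 k n S i + lambda2 k S i else 0)"

end

theory Submission
  imports Defs
begin

lemma ev_inj: "ev a = ev b \<Longrightarrow> a = b"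
  by (drule fun_cong[of _ _ a]) (simp add: ev_def split: if_splits)

lemma root_le_refl: "root_le n x x"
  unfolding root_le_def by (rule exI[of _ "\<lambda>_. 0"]) simp

lemma root_le_trans:
  assumes "root_le n x y" "root_le n y z" shows "root_le n x z"
proof -
  obtain c1 where c1: "y - x = (\<Sum>i\<in>{1..<n}. of_nat (c1 i) * (ev i - ev (Suc i))) + of_nat (c1 n) * ev n"
    using assms(1) unfolding root_le_def by blast
  obtain c2 where c2: "z - y = (\<Sum>i\<in>{1..<n}. of_nat (c2 i) * (ev i - ev (Suc i))) + of_nat (c2 n) * ev n"
    using assms(2) unfolding root_le_def by blast
  have "z - x = (z - y) + (y - x)" by simp
  also have "\<dots> = (\<Sum>i\<in>{1..<n}. of_nat (c1 i + c2 i) * (ev i - ev (Suc i))) + of_nat (c1 n + c2 n) * ev n"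
    unfolding c1 c2 of_nat_add distrib_right sum.distrib by (simp add: algebra_simps)
  finally show ?thesis unfolding root_le_def by (intro exI[of _ "\<lambda>i. c1 i + c2 i"])
qed

lemma root_le_step:
  assumes "1 \<le> i" "i < n" shows "root_le n x (x + (ev i - ev (Suc i)))"
proof -
  let ?c = "\<lambda>j. if j = i then 1 else (0::nat)"
  have "(\<Sum>j\<in>{1..<n}. of_nat (?c j) * (ev j - ev (Suc j))) = (\<Sum>j\<in>{1..<n}. if j = i then ev i - ev (Suc i) else (0::vec))"
    by (rule sum.cong) auto
  also have "\<dots> = ev i - ev (Suc i)" using assms by simp
  finally show ?thesis unfolding root_le_def using assms
    by (intro exI[of _ ?c]) simp
qed

lemma root_le_stepn: "root_le n x (x + ev n)"
proof -
  let ?c = "\<lambda>j. if j = n then 1 else (0::nat)"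
  have "(\<Sum>j\<in>{1..<n}. of_nat (?c j) * (ev j - ev (Suc j))) = (0::vec)"
    by (rule sum.neutral) auto
  then show ?thesis unfolding root_le_def by (intro exI[of _ ?c]) simp
qed

definition rr :: "nat \<Rightarrow> nat \<Rightarrow> nat \<Rightarrow> nat \<Rightarrow> vec" where
  "rr k n a j = (if j < n - k then ev a - ev (k+1+j) else if j = n - k then ev a
                 else ev a + ev (k+1+(2*(n-k)-j)))"

lemma rr_step:
  assumes "k < n" "j < 2*(n-k)" "1 \<le> k"
  shows "root_le n (rr k n a j) (rr k n a (Suc j))"
proof -
  consider "Suc j < n - k" | "Suc j = n - k" | "j = n - k" | "j > n - k" by linarith
  then show ?thesis
  proof cases
    case 1
    have "rr k n a (Suc j) = rr k n a j + (ev (k+1+j) - ev (Suc (k+1+j)))"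
      using 1 by (simp add: rr_def algebra_simps)
    moreover have "root_le n (rr k n a j) (rr k n a j + (ev (k+1+j) - ev (Suc (k+1+j))))"
      by (rule root_le_step) (use 1 in auto)
    ultimately show ?thesis by simp
  next
    case 2
    have "k+1+j = n" using 2 assms by linarith
    then have "rr k n a (Suc j) = rr k n a j + ev n"
      using 2 by (simp add: rr_def algebra_simps)
    then show ?thesis using root_le_stepn by metis
  next
    case 3
    have "k+1+(2*(n-k)-Suc j) = n" using 3 assms by linarith
    then have "rr k n a (Suc j) = rr k n a j + ev n"
      using 3 by (simp add: rr_def algebra_simps)
    then show ?thesis using root_le_stepn by metis
  next
    case 4
    define i where "i = k + (2*(n-k) - Suc j)"
    have i1: "k+1+(2*(n-k)-Suc j) = Suc i" "k+1+(2*(n-k)-j) = Suc (Suc i)"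
      using 4 assms unfolding i_def by linarith+
    have "rr k n a (Suc j) = rr k n a j + (ev (Suc i) - ev (Suc (Suc i)))"
      using 4 i1 by (simp add: rr_def algebra_simps)
    moreover have "root_le n (rr k n a j) (rr k n a j + (ev (Suc i) - ev (Suc (Suc i))))"
      by (rule root_le_step) (use 4 assms in \<open>auto simp: i_def\<close>)
    ultimately show ?thesis by simp
  qed
qed

lemma rr_mono:
  assumes "k < n" "1 \<le> k" "j \<le> j'" "j' \<le> 2*(n-k)"
  shows "root_le n (rr k n a j) (rr k n a j')"
proof -
  have "\<forall>j'. j + d = j' \<longrightarrow> j' \<le> 2*(n-k) \<longrightarrow> root_le n (rr k n a j) (rr k n a j')" for d
  proof (induction d)
    case 0 then show ?case by (auto simp: root_le_refl)
  next
    case (Suc d)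
    then show ?case using rr_step[OF assms(1) _ assms(2), of "j+d" a] root_le_trans
      by (metis Suc_le_lessD add_Suc_right less_or_eq_imp_le)
  qed
  then show ?thesis using assms by (metis le_add_diff_inverse)
qed

definition rowa :: "nat \<Rightarrow> nat \<Rightarrow> nat \<Rightarrow> vec set" where
  "rowa k n a = {ev a - ev b | b. k < b \<and> b \<le> n} \<union> {ev a + ev b | b. k < b \<and> b \<le> n} \<union> {ev a}"

lemma base_row_rowa: "base_row k n i = rowa k n (k+1-i)"
  by (simp add: base_row_def rowa_def)

lemma rowa_rr:
  assumes "k < n"
  shows "rowa k n a = rr k n a ` {0..2*(n-k)}"
proof
  show "rowa k n a \<subseteq> rr k n a ` {0..2*(n-k)}"
  proof
    fix x assume "x \<in> rowa k n a"
    then consider b where "k < b" "b \<le> n" "x = ev a - ev b" | b where "k < b" "b \<le> n" "x = ev a + ev b"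
      | "x = ev a" unfolding rowa_def by blast
    then show "x \<in> rr k n a ` {0..2*(n-k)}"
    proof cases
      case 1
      then show ?thesis by (intro rev_image_eqI[of "b-k-1"]) (auto simp: rr_def)
    next
      case 2
      have e: "k + 1 + (2 * (n - k) - (2*(n-k) - (b-k-1))) = b" using 2 by linarith
      show ?thesis using 2 e by (intro rev_image_eqI[of "2*(n-k) - (b-k-1)"]) (auto simp: rr_def)
    next
      case 3
      then show ?thesis by (intro rev_image_eqI[of "n-k"]) (auto simp: rr_def)
    qed
  qed
next
  show "rr k n a ` {0..2*(n-k)} \<subseteq> rowa k n a"
  proof
    fix x assume "x \<in> rr k n a ` {0..2*(n-k)}"
    then obtain j where j: "j \<le> 2*(n-k)" "x = rr k n a j" by auto
    consider "j < n - k" | "j = n - k" | "j > n - k" by linarith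
    then show "x \<in> rowa k n a"
    proof cases
      case 1 then show ?thesis using j unfolding rowa_def rr_def
        by (intro UnI1) (auto intro!: exI[of _ "k+1+j"])
    next
      case 2 then show ?thesis using j unfolding rowa_def rr_def by auto
    next
      case 3
      have "k < k+1+(2*(n-k)-j)" "k+1+(2*(n-k)-j) \<le> n" using 3 j assms by linarith+
      then show ?thesis using 3 j unfolding rowa_def rr_def by auto
    qed
  qed
qed

lemma rowa_chain:
  assumes "k < n" "1 \<le> k" "x \<in> rowa k n a" "y \<in> rowa k n a"
  shows "root_le n x y \<or> root_le n y x"
proof -
  obtain j j' where "j \<le> 2*(n-k)" "j' \<le> 2*(n-k)" "x = rr k n a j" "y = rr k n a j'"
    using assms rowa_rr by auto
  then show ?thesis using rr_mono[OF assms(1,2)] by (metis nat_le_linear)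
qed

lemma finite_rowa: "k < n \<Longrightarrow> finite (rowa k n a)" by (simp add: rowa_rr)

lemma card_rowa: "k < n \<Longrightarrow> card (rowa k n a) \<le> 2*(n-k)+1"
  using card_image_le[of "{0..2*(n-k)}" "rr k n a"] by (simp add: rowa_rr)

definition colr :: "nat \<Rightarrow> vec set" where
  "colr b = {ev a + ev b | a. 1 \<le> a \<and> a < b}"

lemma colr_img: "colr b = (\<lambda>a. ev a + ev b) ` {1..<b}"
  by (auto simp: colr_def)

lemma finite_colr: "finite (colr b)" by (simp add: colr_img)

lemma card_colr: "card (colr b) \<le> b - 1"
  using card_image_le[of "{1..<b}" "\<lambda>a. ev a + ev b"] by (simp add: colr_img)

lemma ev_plus_inj: "ev a + ev b = ev a' + ev b \<Longrightarrow> a = a'"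
  using ev_inj by (metis add_right_cancel)

lemma inj_colr: "inj_on (\<lambda>a. ev a + ev b) A"
  by (rule inj_onI) (rule ev_plus_inj)

lemma col_chain:
  assumes "1 \<le> a" "a \<le> a'" "a' < b" "b \<le> n"
  shows "root_le n (ev a' + ev b) (ev a + ev b)"
proof -
  have "\<forall>a. 1 \<le> a \<longrightarrow> a + d < b \<longrightarrow> root_le n (ev (a+d) + ev b) (ev a + ev b)" for d
  proof (induction d)
    case 0 then show ?case by (simp add: root_le_refl)
  next
    case (Suc d)
    show ?case
    proof (intro allI impI)
      fix a assume a: "1 \<le> a" "a + Suc d < b"
      have "root_le n (ev (Suc a + d) + ev b) (ev (Suc a) + ev b)"
      proof -
        have h: "Suc a + d < b" "1 \<le> Suc a" using a by simp_all
        show ?thesis using Suc.IH h by blast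
      qed
      moreover have "root_le n (ev (Suc a) + ev b) (ev (Suc a) + ev b + (ev a - ev (Suc a)))"
        by (rule root_le_step) (use a assms in auto)
      moreover have "ev (Suc a) + ev b + (ev a - ev (Suc a)) = ev a + ev b" by (simp add: algebra_simps)
      ultimately show "root_le n (ev (a + Suc d) + ev b) (ev a + ev b)"
        using root_le_trans add_Suc_shift by metis
    qed
  qed
  then show ?thesis using assms by (metis le_add_diff_inverse)
qed

lemma colr_chain:
  assumes "b \<le> n" "x \<in> colr b" "y \<in> colr b"
  shows "root_le n x y \<or> root_le n y x"
proof -
  obtain a where a: "1 \<le> a" "a < b" "x = ev a + ev b" using assms unfolding colr_def by blast
  obtain a' where a': "1 \<le> a'" "a' < b" "y = ev a' + ev b" using assms unfolding colr_def by blast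
  show ?thesis
  proof (cases "a \<le> a'")
    case True then show ?thesis using col_chain[of a a' b n] a a' assms by simp
  next
    case False then show ?thesis using col_chain[of a' a b n] a a' assms by simp
  qed
qed

lemma chain_ideal_eq:
  assumes "finite C" "\<forall>x\<in>C. \<forall>y\<in>C. le x y \<or> le y x" "I \<subseteq> C" "J \<subseteq> C"
    "\<forall>x\<in>I. \<forall>y\<in>C. le y x \<longrightarrow> y \<in> I" "\<forall>x\<in>J. \<forall>y\<in>C. le y x \<longrightarrow> y \<in> J"
    "card I = card J"
  shows "I = J"
proof -
  have "I \<subseteq> J \<or> J \<subseteq> I"
  proof (rule ccontr)
    assume "\<not> (I \<subseteq> J \<or> J \<subseteq> I)"
    then obtain x y where "x \<in> I" "x \<notin> J" "y \<in> J" "y \<notin> I" by blast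
    then show False using assms by blast
  qed
  moreover have "finite I" "finite J" using assms(1,3,4) finite_subset by blast+
  ultimately show ?thesis using assms(7) card_subset_eq by metis
qed

lemma rowa_val:
  assumes "x \<in> rowa k n a" "a \<le> k" "a' \<le> k"
  shows "x a' = (if a' = a then 1 else 0)"
  using assms unfolding rowa_def by (auto simp: ev_def)

lemma rowa_disj:
  assumes "a \<le> k" "a' \<le> k" "a \<noteq> a'"
  shows "rowa k n a \<inter> rowa k n a' = {}"
proof (rule ccontr)
  assume "rowa k n a \<inter> rowa k n a' \<noteq> {}"
  then obtain x where "x \<in> rowa k n a" "x \<in> rowa k n a'" by blast
  then have "x a = 1" "x a = 0" using rowa_val[of x k n a a] rowa_val[of x k n a' a] assms by auto
  then show False by simp
qed

lemma lambda2_colr: "lambda2 k S i = card (S \<inter> colr (k+1-i))"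
proof -
  have "{ev a + ev (k + 1 - i) |a. 1 \<le> a \<and> a < k + 1 - i \<and> ev a + ev (k + 1 - i) \<in> S}
        = S \<inter> colr (k+1-i)" unfolding colr_def by blast
  then show ?thesis unfolding lambda2_def by simp
qed

lemma base_region_iff: "x \<in> base_region k n \<longleftrightarrow> (\<exists>a\<in>{1..k}. x \<in> rowa k n a)"
proof
  assume "x \<in> base_region k n"
  then obtain i where "i \<in> {1..k}" "x \<in> rowa k n (k+1-i)"
    unfolding base_region_def base_row_rowa by auto
  moreover have "k+1-i \<in> {1..k}" using \<open>i \<in> {1..k}\<close> by auto
  ultimately show "\<exists>a\<in>{1..k}. x \<in> rowa k n a" by blast
next
  assume "\<exists>a\<in>{1..k}. x \<in> rowa k n a"
  then obtain a where a: "a \<in> {1..k}" "x \<in> rowa k n a" by blast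
  then have "k+1-(k+1-a) = a" "k+1-a \<in> {1..k}" by auto
  then show "x \<in> base_region k n" unfolding base_region_def base_row_rowa using a
    by (metis UN_iff)
qed

lemma top_region_iff: "x \<in> top_region k \<longleftrightarrow> (\<exists>b\<in>{1..k}. x \<in> colr b)"
proof
  assume "x \<in> top_region k"
  then obtain a b where "x = ev a + ev b" "1 \<le> a" "a < b" "b \<le> k" unfolding top_region_def by blast
  then show "\<exists>b\<in>{1..k}. x \<in> colr b" unfolding colr_def by force
next
  assume "\<exists>b\<in>{1..k}. x \<in> colr b"
  then obtain a b where "x = ev a + ev b" "1 \<le> a" "a < b" "b \<le> k" unfolding colr_def by force
  then show "x \<in> top_region k" unfolding top_region_def by blast
qed

definition LL :: "nat \<Rightarrow> nat \<Rightarrow> vec set \<Rightarrow> nat \<Rightarrow> nat" where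
  "LL k n S a = card (S \<inter> rowa k n a)"

definition TT :: "vec set \<Rightarrow> nat \<Rightarrow> nat" where
  "TT S b = card (S \<inter> colr b)"

lemma fmap_LT:
  assumes "1 \<le> b" "b \<le> k"
  shows "f_map k n S (k+1-b) = LL k n S b + TT S b"
proof -
  have "k+1-b \<in> {1..k}" "k+1-(k+1-b) = b" using assms by auto
  then show ?thesis unfolding f_map_def lambda1_def lambda2_colr LL_def TT_def base_row_rowa by simp
qed

lemma rowa_sub_base: "a \<in> {1..k} \<Longrightarrow> rowa k n a \<subseteq> base_region k n"
  using base_region_iff by blast

lemma colr_sub_top: "b \<in> {1..k} \<Longrightarrow> colr b \<subseteq> top_region k"
  using top_region_iff by blast

lemma diag_row_lower:
  assumes D: "is_OG_diagram k n S" and "a \<in> {1..k}" "a' \<in> {1..k}" "x \<in> S" "x \<in> rowa k n a"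
    "y \<in> rowa k n a'" "root_le n y x"
  shows "y \<in> S"
proof -
  have "lower_ideal_in n (base_region k n) (S \<inter> base_region k n)" using D unfolding is_OG_diagram_def by blast
  moreover have "x \<in> S \<inter> base_region k n" "y \<in> base_region k n"
    using assms rowa_sub_base by blast+
  ultimately show ?thesis using assms(7) unfolding lower_ideal_in_def by blast
qed

lemma diag_col_lower:
  assumes D: "is_OG_diagram k n S" and "b \<in> {1..k}" "b' \<in> {1..k}" "x \<in> S" "x \<in> colr b"
    "y \<in> colr b'" "root_le n y x"
  shows "y \<in> S"
proof -
  have "lower_ideal_in n (top_region k) (S \<inter> top_region k)" using D unfolding is_OG_diagram_def by blast
  moreover have "x \<in> S \<inter> top_region k" "y \<in> top_region k"
    using assms colr_sub_top by blast+
  ultimately show ?thesis using assms(7) unfolding lower_ideal_in_def by blast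
qed

lemma LL_mono:
  assumes D: "is_OG_diagram k n S" and kn: "k < n" and b: "2 \<le> b" "b \<le> k"
  shows "LL k n S (b-1) \<le> LL k n S b"
proof -
  define d where "d = ev (b-1) - ev b"
  let ?\<phi> = "\<lambda>x::vec. x - d"
  have img: "?\<phi> ` (S \<inter> rowa k n (b-1)) \<subseteq> S \<inter> rowa k n b"
  proof
    fix z assume "z \<in> ?\<phi> ` (S \<inter> rowa k n (b-1))"
    then obtain x where x: "x \<in> S" "x \<in> rowa k n (b-1)" "z = x - d" by blast
    have zr: "z \<in> rowa k n b"
      using x(2) unfolding x(3) rowa_def d_def by (auto simp: algebra_simps)
    have "root_le n z (z + (ev (b-1) - ev (Suc (b-1))))"
      by (rule root_le_step) (use b kn in auto)
    moreover have "z + (ev (b-1) - ev (Suc (b-1))) = x" using b unfolding x(3) d_def by simp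
    ultimately have "root_le n z x" by simp
    moreover have "b-1 \<in> {1..k}" "b \<in> {1..k}" using b by auto
    ultimately have "z \<in> S" using diag_row_lower[OF D, of "b-1" b x z] x zr by blast
    then show "z \<in> S \<inter> rowa k n b" using zr by blast
  qed
  have "LL k n S (b-1) = card (?\<phi> ` (S \<inter> rowa k n (b-1)))"
    unfolding LL_def by (rule card_image[symmetric]) (auto intro: inj_onI)
  also have "\<dots> \<le> LL k n S b" unfolding LL_def
    by (rule card_mono) (use img finite_rowa[OF kn] in auto)
  finally show ?thesis .
qed

lemma TT_step:
  assumes D: "is_OG_diagram k n S" and kn: "k < n" and b: "2 \<le> b" "b \<le> k"
  shows "TT S (b-1) + (if ev (b-1) + ev b \<in> S then 1 else 0) \<le> TT S b"
proof -
  define d where "d = ev (b-1) - ev b"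
  let ?\<phi> = "\<lambda>x::vec. x - d"
  have img: "?\<phi> ` (S \<inter> colr (b-1)) \<subseteq> (S \<inter> colr b) - {ev (b-1) + ev b}"
  proof
    fix z assume "z \<in> ?\<phi> ` (S \<inter> colr (b-1))"
    then obtain x where x: "x \<in> S" "x \<in> colr (b-1)" "z = x - d" by blast
    then obtain a where a: "1 \<le> a" "a < b - 1" "x = ev a + ev (b-1)" unfolding colr_def by blast
    have za: "z = ev a + ev b" unfolding x(3) a(3) d_def by (simp add: algebra_simps)
    have zr: "z \<in> colr b" using a unfolding za colr_def by auto
    have zne: "z \<noteq> ev (b-1) + ev b" using a ev_plus_inj unfolding za by force
    have "root_le n z (z + (ev (b-1) - ev (Suc (b-1))))"
      by (rule root_le_step) (use b kn in auto)
    moreover have "z + (ev (b-1) - ev (Suc (b-1))) = x" using b unfolding za a(3) by simp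
    ultimately have "root_le n z x" by simp
    moreover have "b-1 \<in> {1..k}" "b \<in> {1..k}" using b by auto
    ultimately have "z \<in> S" using diag_col_lower[OF D, of "b-1" b x z] x zr by blast
    then show "z \<in> (S \<inter> colr b) - {ev (b-1) + ev b}" using zr zne by blast
  qed
  have "TT S (b-1) = card (?\<phi> ` (S \<inter> colr (b-1)))"
    unfolding TT_def by (rule card_image[symmetric]) (auto intro: inj_onI)
  also have "\<dots> \<le> card ((S \<inter> colr b) - {ev (b-1) + ev b})"
    by (rule card_mono) (use img finite_colr in auto)
  finally have le1: "TT S (b-1) \<le> card ((S \<inter> colr b) - {ev (b-1) + ev b})" .
  have mem: "ev (b-1) + ev b \<in> colr b" using b unfolding colr_def by force
  show ?thesis
  proof (cases "ev (b-1) + ev b \<in> S")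
    case True
    then have "TT S b = Suc (card ((S \<inter> colr b) - {ev (b-1) + ev b}))"
      unfolding TT_def using mem finite_colr by (intro card.remove) auto
    then show ?thesis using le1 True by simp
  next
    case False
    then have "(S \<inter> colr b) - {ev (b-1) + ev b} = S \<inter> colr b" by blast
    then show ?thesis using le1 False unfolding TT_def by simp
  qed
qed

lemma TT_zero:
  assumes D: "is_OG_diagram k n S" and kn: "k < n" and b: "2 \<le> b" "b \<le> k"
    and nS: "ev (b-1) + ev b \<notin> S"
  shows "TT S b = 0"
proof -
  have "S \<inter> colr b = {}"
  proof (rule ccontr)
    assume "S \<inter> colr b \<noteq> {}"
    then obtain x where x: "x \<in> S" "x \<in> colr b" by blast
    then obtain a where a: "1 \<le> a" "a < b" "x = ev a + ev b" unfolding colr_def by blast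
    have "root_le n (ev (b-1) + ev b) x" unfolding a(3) by (rule col_chain) (use a b kn in auto)
    moreover have "ev (b-1) + ev b \<in> colr b" using b unfolding colr_def by force
    moreover have "b \<in> {1..k}" using b by auto
    ultimately have "ev (b-1) + ev b \<in> S" using diag_col_lower[OF D, of b b x] x by blast
    then show False using nS by blast
  qed
  then show ?thesis unfolding TT_def by simp
qed

lemma count_eq:
  assumes kn: "k < n" and ab: "1 \<le> a" "a < b" "b \<le> k"
  shows "card (S \<inter> (base_row k n (k + 1 - a) \<union> base_row k n (k + 1 - b))) = LL k n S a + LL k n S b"
proof -
  have e: "k+1-(k+1-a) = a" "k+1-(k+1-b) = b" using ab by auto
  have "S \<inter> (base_row k n (k + 1 - a) \<union> base_row k n (k + 1 - b)) = (S \<inter> rowa k n a) \<union> (S \<inter> rowa k n b)"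
    unfolding base_row_rowa e by blast
  moreover have "(S \<inter> rowa k n a) \<inter> (S \<inter> rowa k n b) = {}" using rowa_disj[of a k b n] ab by auto
  ultimately show ?thesis unfolding LL_def
    using card_Un_disjoint finite_rowa[OF kn] by (metis finite_Int)
qed

lemma diag_cond:
  assumes D: "is_OG_diagram k n S" and kn: "k < n" and ab: "1 \<le> a" "a < b" "b \<le> k"
  shows "(LL k n S a + LL k n S b > 2 * n + 1 - 2 * k \<longrightarrow> ev a + ev b \<in> S) \<and>
         (LL k n S a + LL k n S b < 2 * n + 1 - 2 * k \<longrightarrow> ev a + ev b \<notin> S)"
proof -
  have "\<forall>a b. 1 \<le> a \<and> a < b \<and> b \<le> k \<longrightarrow>
        (let m = card (S \<inter> (base_row k n (k + 1 - a) \<union> base_row k n (k + 1 - b))) in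
          (m > 2 * n + 1 - 2 * k \<longrightarrow> ev a + ev b \<in> S) \<and>
          (m < 2 * n + 1 - 2 * k \<longrightarrow> ev a + ev b \<notin> S))"
    using D unfolding is_OG_diagram_def by blast
  then have "let m = card (S \<inter> (base_row k n (k + 1 - a) \<union> base_row k n (k + 1 - b))) in
          (m > 2 * n + 1 - 2 * k \<longrightarrow> ev a + ev b \<in> S) \<and>
          (m < 2 * n + 1 - 2 * k \<longrightarrow> ev a + ev b \<notin> S)" using ab by blast
  then show ?thesis unfolding Let_def count_eq[OF kn ab] .
qed

lemma TT_lower:
  assumes D: "is_OG_diagram k n S" and kn: "k < n" and b: "1 \<le> b" "b \<le> k"
  shows "card {a\<in>{1..<b}. LL k n S a + LL k n S b > 2 * n + 1 - 2 * k} \<le> TT S b"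
proof -
  let ?A = "{a\<in>{1..<b}. LL k n S a + LL k n S b > 2 * n + 1 - 2 * k}"
  have "(\<lambda>a. ev a + ev b) ` ?A \<subseteq> S \<inter> colr b"
    using diag_cond[OF D kn] b unfolding colr_def by auto
  then have "card ((\<lambda>a. ev a + ev b) ` ?A) \<le> TT S b"
    unfolding TT_def by (rule card_mono[OF finite_Int[OF disjI2[OF finite_colr]]])
  then show ?thesis using card_image[OF inj_colr] by metis
qed

lemma TT_upper:
  assumes D: "is_OG_diagram k n S" and kn: "k < n" and b: "1 \<le> b" "b \<le> k"
  shows "TT S b \<le> card {a\<in>{1..<b}. LL k n S a + LL k n S b \<ge> 2 * n + 1 - 2 * k}"
proof -
  let ?A = "{a\<in>{1..<b}. LL k n S a + LL k n S b \<ge> 2 * n + 1 - 2 * k}"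
  have "S \<inter> colr b \<subseteq> (\<lambda>a. ev a + ev b) ` ?A"
  proof
    fix x assume "x \<in> S \<inter> colr b"
    then obtain a where a: "1 \<le> a" "a < b" "x = ev a + ev b" "x \<in> S" unfolding colr_def by blast
    then have "\<not> LL k n S a + LL k n S b < 2 * n + 1 - 2 * k" using diag_cond[OF D kn a(1,2) b(2)] by blast
    then show "x \<in> (\<lambda>a. ev a + ev b) ` ?A" using a by auto
  qed
  then have "TT S b \<le> card ((\<lambda>a. ev a + ev b) ` ?A)"
    unfolding TT_def by (rule card_mono[rotated]) simp
  also have "\<dots> \<le> card ?A" by (rule card_image_le) simp
  finally show ?thesis .
qed

lemma key_less:
  assumes D: "is_OG_diagram k n S" and D': "is_OG_diagram k n S'" and kn: "k < n"
    and b: "1 \<le> b" "b \<le> k" and agree: "\<forall>a. 1 \<le> a \<and> a < b \<longrightarrow> LL k n S a = LL k n S' a"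
    and lt: "LL k n S b < LL k n S' b"
  shows "LL k n S b + TT S b < LL k n S' b + TT S' b"
proof -
  have "TT S b \<le> card {a\<in>{1..<b}. LL k n S a + LL k n S b \<ge> 2 * n + 1 - 2 * k}"
    by (rule TT_upper[OF D kn b])
  also have "\<dots> \<le> card {a\<in>{1..<b}. LL k n S' a + LL k n S' b > 2 * n + 1 - 2 * k}"
    by (rule card_mono) (use agree lt in auto)
  also have "\<dots> \<le> TT S' b" by (rule TT_lower[OF D' kn b])
  finally show ?thesis using lt by simp
qed

lemma LL_eq:
  assumes D: "is_OG_diagram k n S" and D': "is_OG_diagram k n S'" and kn: "k < n"
    and f: "f_map k n S = f_map k n S'"
  shows "1 \<le> b \<Longrightarrow> b \<le> k \<Longrightarrow> LL k n S b = LL k n S' b"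
proof (induction b rule: less_induct)
  case (less b)
  have agree: "\<forall>a. 1 \<le> a \<and> a < b \<longrightarrow> LL k n S a = LL k n S' a" using less by auto
  have sum: "LL k n S b + TT S b = LL k n S' b + TT S' b"
    using fmap_LT[OF less.prems, of n S] fmap_LT[OF less.prems, of n S'] f by simp
  show ?case
  proof (rule ccontr)
    assume "LL k n S b \<noteq> LL k n S' b"
    then consider "LL k n S b < LL k n S' b" | "LL k n S' b < LL k n S b" by linarith
    then show False
    proof cases
      case 1 then show False using key_less[OF D D' kn less.prems agree] sum by simp
    next
      case 2 then show False using key_less[OF D' D kn less.prems] agree sum by simp
    qed
  qed
qed

theorem lemma3p8:
  fixes k n :: nat
  assumes "1 \<le> k" and "k < n"
  shows "f_map k n ` Theta k n \<subseteq> P_part k n \<and> inj_on (f_map k n) (Theta k n)"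
proof
  note k1 = assms(1) and kn = assms(2)
  show "f_map k n ` Theta k n \<subseteq> P_part k n"
  proof
    fix g assume "g \<in> f_map k n ` Theta k n"
    then obtain S where D: "is_OG_diagram k n S" and g: "g = f_map k n S" unfolding Theta_def by blast
    have g0: "\<forall>i. i \<notin> {1..k} \<longrightarrow> g i = 0" unfolding g f_map_def by simp
    have gb: "g (k+1-b) = LL k n S b + TT S b" if "1 \<le> b" "b \<le> k" for b
      unfolding g by (rule fmap_LT[OF that])
    have adj: "g i = LL k n S (k+1-i) + TT S (k+1-i) \<and> g (Suc i) = LL k n S (k-i) + TT S (k-i)
        \<and> 2 \<le> k+1-i \<and> k+1-i \<le> k \<and> k - i = k+1-i-1" if "i \<in> {1..<k}" for i
    proof -
      have "k+1-(k+1-i) = i" "k+1-(k-i) = Suc i" using that by auto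
      then show ?thesis using gb[of "k+1-i"] gb[of "k-i"] that by auto
    qed
    have mono: "\<forall>i\<in>{1..<k}. g (Suc i) \<le> g i"
    proof
      fix i assume i: "i \<in> {1..<k}"
      define b where "b = k+1-i"
      have A: "g i = LL k n S b + TT S b" "g (Suc i) = LL k n S (b-1) + TT S (b-1)" "2 \<le> b" "b \<le> k"
        using adj[OF i] unfolding b_def by auto
      show "g (Suc i) \<le> g i" using A LL_mono[OF D kn A(3,4)] TT_step[OF D kn A(3,4)] by simp
    qed
    have strict: "\<forall>i\<in>{1..<k}. g i > n - k \<longrightarrow> g i > g (Suc i)"
    proof (intro ballI impI)
      fix i assume i: "i \<in> {1..<k}" and big: "g i > n - k"
      define b where "b = k+1-i"
      have A: "g i = LL k n S b + TT S b" "g (Suc i) = LL k n S (b-1) + TT S (b-1)" "2 \<le> b" "b \<le> k"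
        using adj[OF i] unfolding b_def by auto
      have L: "LL k n S (b-1) \<le> LL k n S b" by (rule LL_mono[OF D kn A(3,4)])
      have T: "TT S (b-1) + (if ev (b-1) + ev b \<in> S then 1 else 0) \<le> TT S b" by (rule TT_step[OF D kn A(3,4)])
      show "g i > g (Suc i)"
      proof (cases "ev (b-1) + ev b \<in> S")
        case True then show ?thesis using A L T by simp
      next
        case False
        have T0: "TT S b = 0" by (rule TT_zero[OF D kn A(3,4) False])
        have "\<not> LL k n S (b-1) + LL k n S b > 2 * n + 1 - 2 * k"
          using diag_cond[OF D kn _ _ A(4), of "b-1"] A(3) False by auto
        then show ?thesis using A T T0 big kn by simp
      qed
    qed
    have first: "g 1 \<le> 2 * n - k"
    proof -
      have "g 1 = LL k n S k + TT S k" using gb[of k] k1 by simp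
      moreover have "LL k n S k \<le> 2*(n-k)+1" unfolding LL_def
        using card_mono[OF finite_rowa[OF kn], of "S \<inter> rowa k n k" k] card_rowa[OF kn, of k] by auto
      moreover have "TT S k \<le> k - 1" unfolding TT_def
        using card_mono[OF finite_colr, of "S \<inter> colr k" k] card_colr[of k] by auto
      ultimately show ?thesis using k1 kn by linarith
    qed
    show "g \<in> P_part k n" unfolding P_part_def using g0 mono strict first by blast
  qed
next
  note k1 = assms(1) and kn = assms(2)
  show "inj_on (f_map k n) (Theta k n)"
  proof (rule inj_onI)
    fix S S' assume "S \<in> Theta k n" "S' \<in> Theta k n" and f: "f_map k n S = f_map k n S'"
    then have D: "is_OG_diagram k n S" and D': "is_OG_diagram k n S'" unfolding Theta_def by auto
    have LLe: "LL k n S b = LL k n S' b" if "1 \<le> b" "b \<le> k" for b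
      using LL_eq[OF D D' kn f that] .
    have TTe: "TT S b = TT S' b" if "1 \<le> b" "b \<le> k" for b
      using fmap_LT[OF that, of n S] fmap_LT[OF that, of n S'] f LLe[OF that] by simp
    have rows: "S \<inter> rowa k n a = S' \<inter> rowa k n a" if a: "a \<in> {1..k}" for a
    proof (rule chain_ideal_eq[where le = "root_le n"])
      show "finite (rowa k n a)" by (rule finite_rowa[OF kn])
      show "\<forall>x\<in>rowa k n a. \<forall>y\<in>rowa k n a. root_le n x y \<or> root_le n y x"
        using rowa_chain[OF kn k1] by blast
      show "\<forall>x\<in>S \<inter> rowa k n a. \<forall>y\<in>rowa k n a. root_le n y x \<longrightarrow> y \<in> S \<inter> rowa k n a"
        using diag_row_lower[OF D a a] by blast
      show "\<forall>x\<in>S' \<inter> rowa k n a. \<forall>y\<in>rowa k n a. root_le n y x \<longrightarrow> y \<in> S' \<inter> rowa k n a"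
        using diag_row_lower[OF D' a a] by blast
      show "card (S \<inter> rowa k n a) = card (S' \<inter> rowa k n a)" using LLe[of a] a unfolding LL_def by auto
    qed auto
    have cols: "S \<inter> colr b = S' \<inter> colr b" if b: "b \<in> {1..k}" for b
    proof (rule chain_ideal_eq[where le = "root_le n"])
      show "finite (colr b)" by (rule finite_colr)
      show "\<forall>x\<in>colr b. \<forall>y\<in>colr b. root_le n x y \<or> root_le n y x"
        using colr_chain[of b n] b kn by auto
      show "\<forall>x\<in>S \<inter> colr b. \<forall>y\<in>colr b. root_le n y x \<longrightarrow> y \<in> S \<inter> colr b"
        using diag_col_lower[OF D b b] by blast
      show "\<forall>x\<in>S' \<inter> colr b. \<forall>y\<in>colr b. root_le n y x \<longrightarrow> y \<in> S' \<inter> colr b"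
        using diag_col_lower[OF D' b b] by blast
      show "card (S \<inter> colr b) = card (S' \<inter> colr b)" using TTe[of b] b unfolding TT_def by auto
    qed auto
    have sub: "S \<subseteq> base_region k n \<union> top_region k" "S' \<subseteq> base_region k n \<union> top_region k"
      using D D' unfolding is_OG_diagram_def by auto
    show "S = S'"
    proof (intro equalityI subsetI)
      fix x assume x: "x \<in> S"
      then consider a where "a \<in> {1..k}" "x \<in> rowa k n a" | b where "b \<in> {1..k}" "x \<in> colr b"
        using sub(1) base_region_iff top_region_iff by blast
      then show "x \<in> S'" using rows cols x by cases blast+
    next
      fix x assume x: "x \<in> S'"
      then consider a where "a \<in> {1..k}" "x \<in> rowa k n a" | b where "b \<in> {1..k}" "x \<in> colr b"
        using sub(2) base_region_iff top_region_iff by blast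
      then show "x \<in> S" using rows cols x by cases blast+
    qed
  qed
qed

end
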